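(* Let $m$ be a non-negative integer and $k=(m+2)^{-2}-1$. Then the identity component of the differential Galois group (over $\mathbb{C}(z)$) of the equation \[ y''+\left(\frac{2}{z}+\frac{1}{z-1}\right)y'+\left(-\frac{1}{(1+k)(z-1)^2}+\frac{1}{(1+k)z(z-1)}\right)y=0,\qquad '=\frac{d}{dz}, \] is Abelian. *)

theory Defs
  imports "HOL-Analysis.Analysis"
begin

inductive polyfun :: "nat \<Rightarrow> ((nat \<Rightarrow> complex) \<Rightarrow> complex) \<Rightarrow> bool" for n where
  pf_const: "polyfun n (\<lambda>x. c)"
| pf_var: "i < n \<Longrightarrow> polyfun n (\<lambda>x. x i)"
| pf_add: "polyfun n p \<Longrightarrow> polyfun n q \<Longrightarrow> polyfun n (\<lambda>x. p x + q x)"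
| pf_mult: "polyfun n p \<Longrightarrow> polyfun n q \<Longrightarrow> polyfun n (\<lambda>x. p x * q x)"

definition mat_coords :: "complex^2^2 \<Rightarrow> nat \<Rightarrow> complex" where
  "mat_coords M = (\<lambda>i. if i = 0 then M$1$1 else if i = 1 then M$1$2
                        else if i = 2 then M$2$1 else M$2$2)"

definition zariski_closed :: "(complex^2^2) set \<Rightarrow> bool" where
  "zariski_closed S \<longleftrightarrow> (\<exists>F. (\<forall>f\<in>F. polyfun 4 f) \<and> S = {M. \<forall>f\<in>F. f (mat_coords M) = 0})"

definition zariski_connected :: "(complex^2^2) set \<Rightarrow> bool" where
  "zariski_connected S \<longleftrightarrow> \<not> (\<exists>A B. zariski_closed A \<and> zariski_closed B \<and> S \<subseteq> A \<union> B \<and>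
       S \<inter> A \<inter> B = {} \<and> S \<inter> A \<noteq> {} \<and> S \<inter> B \<noteq> {})"

definition identity_component :: "(complex^2^2) set \<Rightarrow> (complex^2^2) set" where
  "identity_component G = \<Union>{C. C \<subseteq> G \<and> mat 1 \<in> C \<and> zariski_connected C}"

definition wronski_mat :: "(complex \<Rightarrow> complex) \<Rightarrow> (complex \<Rightarrow> complex) \<Rightarrow> complex \<Rightarrow> complex^2^2" where
  "wronski_mat y1 y2 z = vector [vector [y1 z, y2 z], vector [deriv y1 z, deriv y2 z]]"

text \<open>Polynomial relations over C(z) (denominators cleared, so polynomial in z and the
  four entries of the fundamental matrix) satisfied identically on the domain D.\<close>
definition rel_holds :: "((nat \<Rightarrow> complex) \<Rightarrow> complex) \<Rightarrow> complex set \<Rightarrow> (complex \<Rightarrow> complex^2^2) \<Rightarrow> bool" where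
  "rel_holds P D Y \<longleftrightarrow> (\<forall>z\<in>D. P (\<lambda>i. if i = 0 then z else mat_coords (Y z) (i - 1)) = 0)"

text \<open>Differential Galois group of the Picard--Vessiot extension C(z)(y1,y2,y1',y2')
  of C(z), realised (via the fundamental matrix Y) as the subgroup of GL_2(C)
  of matrices M such that Y M satisfies every algebraic relation over C(z)
  satisfied by Y.\<close>
definition diff_galois_group :: "complex set \<Rightarrow> (complex \<Rightarrow> complex) \<Rightarrow> (complex \<Rightarrow> complex) \<Rightarrow> (complex^2^2) set" where
  "diff_galois_group D y1 y2 = {M. det M \<noteq> 0 \<and>
     (\<forall>P. polyfun 5 P \<longrightarrow> rel_holds P D (wronski_mat y1 y2) \<longrightarrow>
          rel_holds P D (\<lambda>z. wronski_mat y1 y2 z ** M))}"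

end

theory Submission
  imports Defs "HOL-Complex_Analysis.Cauchy_Integral_Formula"
begin

lemma comm_aux:
  fixes a b c d e f g h u1 u2 :: complex
  assumes "a*u1 + b*u2 = u1" "c*u1 + d*u2 = u2" "a*d - b*c = 1"
    "e*u1 + f*u2 = u1" "g*u1 + h*u2 = u2" "e*h - f*g = 1" "u1 \<noteq> 0"
  shows "a*e + b*g = e*a + f*c \<and> a*f + b*h = e*b + f*d \<and> c*e + d*g = g*a + h*c \<and> c*f + d*h = g*b + h*d"
proof -
  have a: "a = (u1 - b*u2)/u1" and c: "c = (u2 - d*u2)/u1" and e: "e = (u1 - f*u2)/u1" and g: "g = (u2-h*u2)/u1"
    using assms by (auto simp: field_simps)
  have d: "d = 1 + b*u2/u1" using assms(3) unfolding a c using assms(7) by (simp add: field_simps)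
  have h: "h = 1 + f*u2/u1" using assms(6) unfolding e g using assms(7) by (simp add: field_simps)
  show ?thesis unfolding a c e g d h using assms(7) by (simp add: field_simps)
qed

lemma comm_aux2:
  fixes a b c d e f g h ua ub :: complex
  assumes "a*ua + b*ub = ua" "c*ua + d*ub = ub" "a*d - b*c = 1"
    "e*ua + f*ub = ua" "g*ua + h*ub = ub" "e*h - f*g = 1" "ua \<noteq> 0 \<or> ub \<noteq> 0"
  shows "a*e + b*g = e*a + f*c \<and> a*f + b*h = e*b + f*d \<and> c*e + d*g = g*a + h*c \<and> c*f + d*h = g*b + h*d"
proof (cases "ua = 0")
  case False thus ?thesis by (rule comm_aux[OF assms(1-6)])
next
  case True
  hence ub: "ub \<noteq> 0" using assms(7) by blast
  have p1: "d*ub + c*ua = ub" by (metis assms(2) add.commute)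
  have p2: "b*ub + a*ua = ua" by (metis assms(1) add.commute)
  have p3: "d*a - c*b = 1" by (metis assms(3) mult.commute)
  have p4: "h*ub + g*ua = ub" by (metis assms(5) add.commute)
  have p5: "f*ub + e*ua = ua" by (metis assms(4) add.commute)
  have p6: "h*e - g*f = 1" by (metis assms(6) mult.commute)
  have "d*h + c*f = h*d + g*b \<and> d*g + c*e = h*c + g*a \<and> b*h + a*f = f*d + e*b \<and> b*g + a*e = f*c + e*a"
    by (rule comm_aux[OF p1 p2 p3 p4 p5 p6 ub])
  then show ?thesis by (metis add.commute)
qed

lemma pf_sub: assumes "polyfun n p" "polyfun n q" shows "polyfun n (\<lambda>x. p x - q x)"
proof -
  have "polyfun n (\<lambda>x. p x + (\<lambda>x. -1) x * q x)" by (intro pf_add pf_mult pf_const assms)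
  thus ?thesis by simp
qed

lemma pf_pow: assumes "polyfun n p" shows "polyfun n (\<lambda>x. p x ^ k)"
proof (induction k)
  case 0 show ?case using pf_const[of n 1] by simp
next
  case (Suc k)
  have "polyfun n (\<lambda>x. p x * p x ^ k)" by (intro pf_mult assms Suc)
  thus ?case by simp
qed

lemma pf_sum: assumes "finite A" "\<And>j. j \<in> A \<Longrightarrow> polyfun n (f j)"
  shows "polyfun n (\<lambda>x. \<Sum>j\<in>A. f j x)"
  using assms
proof (induction A rule: finite_induct)
  case empty show ?case using pf_const[of n 0] by simp
next
  case (insert a A)
  have "polyfun n (\<lambda>x. f a x + (\<Sum>j\<in>A. f j x))" by (intro pf_add insert) auto
  thus ?case using insert by simp
qed

lemma wronsk_const:
  fixes S :: "complex set"
  assumes "convex S" "open S"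
    and g: "\<And>z. z \<in> S \<Longrightarrow> (g has_field_derivative g1 z) (at z)"
       "\<And>z. z \<in> S \<Longrightarrow> (g1 has_field_derivative g2 z) (at z)"
       "\<And>z. z \<in> S \<Longrightarrow> g2 z + p z * g1 z + q z * g z = 0"
    and k: "\<And>z. z \<in> S \<Longrightarrow> (k has_field_derivative k1 z) (at z)"
       "\<And>z. z \<in> S \<Longrightarrow> (k1 has_field_derivative k2 z) (at z)"
       "\<And>z. z \<in> S \<Longrightarrow> k2 z + p z * k1 z + q z * k z = 0"
    and h: "\<And>z. z \<in> S \<Longrightarrow> (h has_field_derivative h1 z) (at z)"
       "\<And>z. z \<in> S \<Longrightarrow> h1 z = p z * h z"
  shows "\<exists>c. \<forall>z\<in>S. h z * (g z * k1 z - g1 z * k z) = c"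
proof (rule has_field_derivative_zero_constant[OF assms(1)])
  fix z assume z: "z \<in> S"
  have "((\<lambda>z. h z * (g z * k1 z - g1 z * k z)) has_field_derivative
     h1 z * (g z * k1 z - g1 z * k z) + h z * (g1 z * k1 z + g z * k2 z - (g2 z * k z + g1 z * k1 z))) (at z)"
    using g[OF z] k[OF z] h[OF z] by (auto intro!: derivative_eq_intros)
  moreover have "h1 z * (g z * k1 z - g1 z * k z) + h z * (g1 z * k1 z + g z * k2 z - (g2 z * k z + g1 z * k1 z)) = 0"
    using g(3)[OF z] k(3)[OF z] h(2)[OF z] by algebra
  ultimately show "((\<lambda>z. h z * (g z * k1 z - g1 z * k z)) has_field_derivative 0) (at z within S)"
    by (metis has_field_derivative_at_within)
qed
fun acoef :: "nat \<Rightarrow> nat \<Rightarrow> complex" where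
  "acoef m 0 = 1"
| "acoef m (Suc j) = acoef m j * ((of_nat m + 2)^2 - (of_nat j + 2)^2) / ((of_nat j + 2)^2 - 1)"

lemma acoef_rec: "acoef m (Suc j) * ((of_nat j + 2)^2 - 1) = acoef m j * ((of_nat m + 2)^2 - (of_nat j + 2)^2)"
proof -
  have "(of_nat j + 2 :: complex)^2 - 1 \<noteq> 0"
  proof
    assume "(of_nat j + 2 :: complex)^2 - 1 = 0"
    hence "(of_nat ((j+2)^2) :: complex) = of_nat 1" by (simp add: add.commute)
    hence "(j+2)^2 = 1" using of_nat_eq_iff by blast
    thus False by (simp add: power2_eq_square)
  qed
  thus ?thesis by simp
qed

definition fsol :: "nat \<Rightarrow> complex \<Rightarrow> complex" where
  "fsol m z = (\<Sum>j<Suc m. acoef m j * (1/(z-1))^(j+2))"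
definition fsol1 :: "nat \<Rightarrow> complex \<Rightarrow> complex" where
  "fsol1 m z = (\<Sum>j<Suc m. acoef m j * (- of_nat (j+2)) * (1/(z-1))^(j+3))"
definition fsol2 :: "nat \<Rightarrow> complex \<Rightarrow> complex" where
  "fsol2 m z = (\<Sum>j<Suc m. acoef m j * (of_nat (j+2) * of_nat (j+3)) * (1/(z-1))^(j+4))"

lemma deriv_invpow:
  fixes z :: complex assumes "z \<noteq> 1"
  shows "((\<lambda>z. (1/(z-1))^k) has_field_derivative (- of_nat k) * (1/(z-1))^(k+1)) (at z)"
proof -
  have nz: "z - 1 \<noteq> 0" using assms by simp
  have d: "((\<lambda>z. 1/(z-1)) has_field_derivative (-1) * ((1/(z-1))^2)) (at z)"
    using nz by (auto intro!: derivative_eq_intros simp: power2_eq_square field_simps)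
  show ?thesis
    apply (rule DERIV_cong[OF DERIV_power[OF d]])
  proof -
    have "\<forall>w::complex. of_nat k * ((-1) * w^2 * w^(k - Suc 0)) = - of_nat k * w^(k+1)"
      by (cases k) (simp_all add: power2_eq_square algebra_simps)
    thus "of_nat k * ((-1) * (1/(z-1))^2 * (1/(z-1))^(k - Suc 0)) = - of_nat k * (1/(z-1))^(k+1)"
      by blast
  qed
qed

lemma fsol_deriv: "z \<noteq> 1 \<Longrightarrow> (fsol m has_field_derivative fsol1 m z) (at z)"
  unfolding fsol_def fsol1_def
  apply (rule DERIV_cong[OF DERIV_sum])
   apply (rule DERIV_cmult)
   apply (erule deriv_invpow)
  apply (intro sum.cong refl)
  apply (subgoal_tac "x + 2 + 1 = x + 3")
   apply (simp only: mult_minus_left mult_minus_right mult.assoc)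
  by simp

lemma fsol1_deriv: "z \<noteq> 1 \<Longrightarrow> (fsol1 m has_field_derivative fsol2 m z) (at z)"
  unfolding fsol1_def fsol2_def
  apply (rule DERIV_cong[OF DERIV_sum])
   apply (rule DERIV_cmult)
   apply (erule deriv_invpow)
  apply (intro sum.cong refl)
  apply (subgoal_tac "x + 3 + 1 = x + 4")
   apply (simp only: mult_minus_left mult_minus_right mult.assoc minus_minus of_nat_add)
  by simp

lemma ode_alg:
  fixes z F F1 F2 n :: complex
  assumes "z \<noteq> 0" "z \<noteq> 1" "n \<noteq> 0"
  shows "(F2 + (2 / z + 1 / (z - 1)) * F1 + (- 1 / ((1 + (1 / n^2 - 1)) * (z - 1)^2) + 1 / ((1 + (1/n^2 - 1)) * z * (z - 1))) * F) * (z * (1/(z-1)))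
   = ((1/(z-1)) + 1) * F2 + ((1/(z-1))^2 + 3 * (1/(z-1))) * F1 - n^2 * (1/(z-1))^3 * F"
proof -
  obtain t where z: "z = t + 1" by (metis diff_add_cancel)
  have t: "t \<noteq> 0" "t + 1 \<noteq> 0" using assms z by auto
  have t2: "t + t * t \<noteq> 0" "t * t + t \<noteq> 0" using t by (metis distrib_left mult.commute mult.right_neutral mult_eq_0_iff add.commute)+
  have k: "1 + (1 / n^2 - 1) = 1 / n^2" by simp
  have e1: "z * (1/(z-1)) = 1/(z-1) + 1" using t unfolding z by (simp add: field_simps)
  have e2: "(2 / z + 1 / (z - 1)) * (z * (1/(z-1))) = (1/(z-1))^2 + 3 * (1/(z-1))"
  proof -
    have "t*t + t*(t*t) \<noteq> 0" using t by (metis mult_eq_0_iff distrib_left mult.right_neutral add.commute)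
    thus ?thesis using t unfolding z by (simp add: field_simps power2_eq_square)
  qed
  have e3: "(- 1 / ((1 / n^2) * (z - 1)^2) + 1 / ((1 / n^2) * z * (z - 1))) * (z * (1/(z-1))) = - (n^2) * (1/(z-1))^3"
  proof -
    define w where "w = 1/(z-1)"
    have a1: "- 1 / ((1 / n^2) * (z - 1)^2) = - (n^2) * w^2" unfolding w_def using assms(3) by (simp add: field_simps power2_eq_square)
    have a2: "1 / ((1 / n^2) * z * (z - 1)) = n^2 * w / z" unfolding w_def using assms by (simp add: field_simps)
    have ew: "z * w = w + 1" using e1 unfolding w_def .
    have "(- (n^2) * w^2 + n^2 * w / z) * (z * w) = - (n^2) * w^2 * (z * w) + n^2 * w * w * (z / z)"
      by (simp add: algebra_simps)
    also have "\<dots> = - (n^2) * w^3" using assms(1) unfolding ew by (simp add: algebra_simps power2_eq_square power3_eq_cube)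
    finally show ?thesis unfolding a1 a2 w_def .
  qed
  have gen: "\<And>a b c d e x :: complex. (a + b*c + d*e)*x = a*x + c*(b*x) + e*(d*x)" by (simp add: algebra_simps)
  show ?thesis
    apply (unfold k gen)
    apply (unfold e2 e3)
    apply (unfold e1)
    by (simp add: algebra_simps)
qed

lemma E_zero:
  fixes w :: complex and m :: nat
  defines "n \<equiv> of_nat m + 2 :: complex"
  shows "(w + 1) * (\<Sum>j<Suc m. acoef m j * (of_nat (j+2) * of_nat (j+3)) * w^(j+4))
     + (w^2 + 3*w) * (\<Sum>j<Suc m. acoef m j * (- of_nat (j+2)) * w^(j+3))
     - n^2 * w^3 * (\<Sum>j<Suc m. acoef m j * w^(j+2)) = 0"
proof -
  define g where "g j = acoef m j * (of_nat (j+2) * of_nat j) * w^(j+4)" for j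
  define h where "h j = acoef m j * ((of_nat j + 2)^2 - n^2) * w^(j+5)" for j
  have "(w + 1) * (\<Sum>j<Suc m. acoef m j * (of_nat (j+2) * of_nat (j+3)) * w^(j+4))
     + (w^2 + 3*w) * (\<Sum>j<Suc m. acoef m j * (- of_nat (j+2)) * w^(j+3))
     - n^2 * w^3 * (\<Sum>j<Suc m. acoef m j * w^(j+2)) = (\<Sum>j<Suc m. h j + g j)"
    unfolding sum_distrib_left sum_subtractf[symmetric] sum.distrib[symmetric]
    by (intro sum.cong refl) (unfold g_def h_def power_add of_nat_add of_nat_numeral, algebra)
  also have "\<dots> = (\<Sum>j<m. h j + g (Suc j))"
    unfolding sum.distrib sum.lessThan_Suc_shift[of g] by (simp add: g_def h_def n_def)
  also have "\<dots> = 0"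
  proof (intro sum.neutral ballI)
    fix j
    have "g (Suc j) = acoef m (Suc j) * ((of_nat j + 2)^2 - 1) * w^(j+5)"
      by (simp add: g_def algebra_simps power2_eq_square)
    also have "\<dots> = acoef m j * (n^2 - (of_nat j + 2)^2) * w^(j+5)"
      unfolding n_def by (simp only: acoef_rec)
    finally show "h j + g (Suc j) = 0" by (simp add: h_def algebra_simps)
  qed
  finally show ?thesis .
qed

lemma fsol_ode:
  fixes z :: complex and m :: nat
  assumes "z \<noteq> 0" "z \<noteq> 1"
  defines "k \<equiv> 1 / (of_nat m + 2)^2 - 1"
  shows "fsol2 m z + (2 / z + 1 / (z - 1)) * fsol1 m z + (- 1 / ((1 + k) * (z - 1)^2) + 1 / ((1 + k) * z * (z - 1))) * fsol m z = 0"
proof -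
  have n0: "(of_nat m + 2 :: complex) \<noteq> 0"
    by (metis add_is_0 of_nat_add of_nat_eq_0_iff of_nat_numeral zero_neq_numeral)
  have "(fsol2 m z + (2 / z + 1 / (z - 1)) * fsol1 m z + (- 1 / ((1 + k) * (z - 1)^2) + 1 / ((1 + k) * z * (z - 1))) * fsol m z) * (z * (1/(z-1))) = 0"
    unfolding k_def ode_alg[OF assms(1,2) n0] fsol_def fsol1_def fsol2_def
    using E_zero[of "1/(z-1)" m] by simp
  moreover have "z * (1/(z-1)) \<noteq> 0" using assms by simp
  ultimately show ?thesis by simp
qed


lemma lin_dep_zero:
  fixes y1 y2 :: "complex \<Rightarrow> complex" and S :: "complex set"
  assumes "open S" "y1 holomorphic_on S" "y2 holomorphic_on S" "z \<in> S"
    and zero: "\<And>z. z \<in> S \<Longrightarrow> \<alpha> * y1 z + \<beta> * y2 z = 0"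
    and W: "y1 z * deriv y2 z - y2 z * deriv y1 z \<noteq> 0"
  shows "\<alpha> = 0 \<and> \<beta> = 0"
proof -
  have d1: "((\<lambda>z. \<alpha> * y1 z + \<beta> * y2 z) has_field_derivative \<alpha> * deriv y1 z + \<beta> * deriv y2 z) (at z)"
    using holomorphic_derivI[OF assms(2,1,4)] holomorphic_derivI[OF assms(3,1,4)]
    by (auto intro!: derivative_eq_intros)
  have "((\<lambda>z. \<alpha> * y1 z + \<beta> * y2 z) has_field_derivative 0) (at z)"
    by (rule has_field_derivative_transform_within_open[OF DERIV_const assms(1,4)]) (simp add: zero)
  hence e2: "\<alpha> * deriv y1 z + \<beta> * deriv y2 z = 0" using d1 DERIV_unique by blast
  have e1: "\<alpha> * y1 z + \<beta> * y2 z = 0" using zero assms(4) by blast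
  have "\<alpha> * (y1 z * deriv y2 z - y2 z * deriv y1 z) = deriv y2 z * (\<alpha> * y1 z + \<beta> * y2 z) - y2 z * (\<alpha> * deriv y1 z + \<beta> * deriv y2 z)"
    by (simp add: algebra_simps)
  hence a: "\<alpha> = 0" using e1 e2 W by simp
  have "\<beta> * (y1 z * deriv y2 z - y2 z * deriv y1 z) = y1 z * (\<alpha> * deriv y1 z + \<beta> * deriv y2 z) - deriv y1 z * (\<alpha> * y1 z + \<beta> * y2 z)"
    by (simp add: algebra_simps)
  hence "\<beta> = 0" using e1 e2 W by simp
  with a show ?thesis by blast
qed

lemma Q_finite_roots:
  "finite {t::complex. (\<Sum>j<Suc m. acoef m j * t^(m-j)) = 0}"
proof -
  have eq: "(\<Sum>j<Suc m. acoef m j * t^(m-j)) = (\<Sum>i\<le>m. acoef m (m-i) * t^i)" for t :: complex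
  proof -
    have "(\<Sum>j<Suc m. acoef m j * t^(m-j)) = (\<Sum>i<Suc m. acoef m (Suc m - Suc i) * t^(m - (Suc m - Suc i)))"
      by (rule sum.nat_diff_reindex[symmetric])
    also have "\<dots> = (\<Sum>i<Suc m. acoef m (m-i) * t^i)"
      by (intro sum.cong refl) auto
    finally show ?thesis using lessThan_Suc_atMost by simp
  qed
  have "finite {t::complex. (\<Sum>i\<le>m. acoef m (m-i) * t^i) = 0}"
    by (subst polyfun_finite_roots) (rule exI[of _ m], simp)
  thus ?thesis unfolding eq .
qed

lemma fsol_poly:
  fixes z :: complex assumes "z \<noteq> 1"
  shows "(z-1)^(m+2) * fsol m z = (\<Sum>j<Suc m. acoef m j * (z-1)^(m-j))"
  unfolding fsol_def sum_distrib_left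
proof (intro sum.cong refl)
  fix j assume "j \<in> {..<Suc m}"
  hence j: "m + 2 = (m - j) + (j + 2)" by auto
  have e: "(z-1)^(j+2) * (1/(z-1))^(j+2) = 1"
    unfolding power_mult_distrib[symmetric] using assms by simp
  have "(z-1)^(m+2) * (1/(z-1))^(j+2) = (z-1)^(m-j) * ((z-1)^(j+2) * (1/(z-1))^(j+2))"
    by (simp only: j power_add mult.assoc)
  hence "(z-1)^(m+2) * (1/(z-1))^(j+2) = (z-1)^(m-j)" unfolding e by simp
  thus "(z-1)^(m+2) * (acoef m j * (1/(z-1))^(j+2)) = acoef m j * (z-1)^(m-j)"
    by (metis mult.left_commute)
qed

theorem lemma3:
  fixes m :: nat and k :: complex and y1 y2 :: "complex \<Rightarrow> complex"
  defines "k \<equiv> 1 / (of_nat m + 2)^2 - 1"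
  defines "D \<equiv> ball (1/2 :: complex) (1/2)"
  assumes hol: "y1 holomorphic_on D" "y2 holomorphic_on D"
    and ode: "\<And>y z. y \<in> {y1, y2} \<Longrightarrow> z \<in> D \<Longrightarrow>
        deriv (deriv y) z + (2 / z + 1 / (z - 1)) * deriv y z
        + (- 1 / ((1 + k) * (z - 1)^2) + 1 / ((1 + k) * z * (z - 1))) * y z = 0"
    and fund: "\<And>z. z \<in> D \<Longrightarrow> y1 z * deriv y2 z - y2 z * deriv y1 z \<noteq> 0"
  shows "\<forall>A\<in>identity_component (diff_galois_group D y1 y2).
           \<forall>B\<in>identity_component (diff_galois_group D y1 y2). A ** B = B ** A"
proof -
  have oD: "open D" and cD: "convex D" unfolding D_def by auto
  have nz: "z \<noteq> 0" "z \<noteq> 1" if "z \<in> D" for z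
    using that unfolding D_def by (auto simp: dist_norm)
  define p where "p z = 2 / z + 1 / (z - 1)" for z :: complex
  define q where "q z = - 1 / ((1 + k) * (z - 1)^2) + 1 / ((1 + k) * z * (z - 1))" for z :: complex
  define h where "h z = z^2 * (z - 1)" for z :: complex
  define h1 where "h1 z = 2 * z * (z - 1) + z^2" for z :: complex
  have hd: "(h has_field_derivative h1 z) (at z)" for z
    unfolding h_def h1_def by (rule DERIV_cong, (rule derivative_eq_intros refl)+) (simp add: algebra_simps power2_eq_square)
  have hp: "h1 z = p z * h z" if "z \<in> D" for z
    using nz[OF that] unfolding h1_def p_def h_def by (simp add: field_simps power2_eq_square)
  have yd: "(y has_field_derivative deriv y z) (at z)" "(deriv y has_field_derivative deriv (deriv y) z) (at z)"
    "deriv (deriv y) z + p z * deriv y z + q z * y z = 0"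
    if "y \<in> {y1, y2}" "z \<in> D" for y z
  proof -
    have hy: "y holomorphic_on D" using that hol by auto
    show "(y has_field_derivative deriv y z) (at z)" by (rule holomorphic_derivI[OF hy oD that(2)])
    show "(deriv y has_field_derivative deriv (deriv y) z) (at z)"
      by (rule holomorphic_derivI[OF holomorphic_deriv[OF hy oD] oD that(2)])
    show "deriv (deriv y) z + p z * deriv y z + q z * y z = 0" using ode[OF that] unfolding p_def q_def .
  qed
  have fd: "(fsol m has_field_derivative fsol1 m z) (at z)" "(fsol1 m has_field_derivative fsol2 m z) (at z)"
     "fsol2 m z + p z * fsol1 m z + q z * fsol m z = 0" if "z \<in> D" for z
    using fsol_deriv[OF nz(2)[OF that]] fsol1_deriv[OF nz(2)[OF that]]
      fsol_ode[OF nz[OF that], of m] that unfolding p_def q_def k_def by auto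
  have "\<exists>c. \<forall>z\<in>D. h z * (y1 z * deriv y2 z - deriv y1 z * y2 z) = c"
    by (rule wronsk_const[OF cD oD, of y1 "deriv y1" "deriv (deriv y1)" p q y2 "deriv y2" "deriv (deriv y2)" h h1]) (auto intro: yd fd hd hp)
  then obtain c where c: "\<And>z. z \<in> D \<Longrightarrow> h z * (y1 z * deriv y2 z - deriv y1 z * y2 z) = c" by blast
  have "\<exists>c1. \<forall>z\<in>D. h z * (y1 z * fsol1 m z - deriv y1 z * fsol m z) = c1"
    by (rule wronsk_const[OF cD oD, of y1 "deriv y1" "deriv (deriv y1)" p q "fsol m" "fsol1 m" "fsol2 m" h h1]) (auto intro: yd fd hd hp)
  then obtain c1 where c1: "\<And>z. z \<in> D \<Longrightarrow> h z * (y1 z * fsol1 m z - deriv y1 z * fsol m z) = c1" by blast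
  have "\<exists>c2. \<forall>z\<in>D. h z * (y2 z * fsol1 m z - deriv y2 z * fsol m z) = c2"
    by (rule wronsk_const[OF cD oD, of y2 "deriv y2" "deriv (deriv y2)" p q "fsol m" "fsol1 m" "fsol2 m" h h1]) (auto intro: yd fd hd hp)
  then obtain c2 where c2: "\<And>z. z \<in> D \<Longrightarrow> h z * (y2 z * fsol1 m z - deriv y2 z * fsol m z) = c2" by blast
  have cf: "c * fsol m z = c1 * y2 z - c2 * y1 z" if "z \<in> D" for z
    unfolding c[OF that, symmetric] c1[OF that, symmetric] c2[OF that, symmetric] by (simp add: algebra_simps)
  have hW: "h z * (y1 z * deriv y2 z - y2 z * deriv y1 z) \<noteq> 0" if "z \<in> D" for z
    using fund[OF that] nz[OF that] unfolding h_def by simp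
  have half: "1/2 \<in> D" unfolding D_def by simp
  have c0: "c \<noteq> 0" using c[OF half] hW[OF half] by (simp add: algebra_simps)
  have u0: "c1 \<noteq> 0 \<or> c2 \<noteq> 0"
  proof (rule ccontr)
    assume "\<not> (c1 \<noteq> 0 \<or> c2 \<noteq> 0)"
    hence "fsol m z = 0" if "z \<in> D" for z using cf[OF that] c0 by simp
    hence "(\<Sum>j<Suc m. acoef m j * (z-1)^(m-j)) = 0" if "z \<in> D" for z
      using fsol_poly[OF nz(2)[OF that], of m] that by simp
    hence "D \<subseteq> (\<lambda>t. t + 1) ` {t::complex. (\<Sum>j<Suc m. acoef m j * t^(m-j)) = 0}"
      by (auto intro!: image_eqI[where x = "_ - 1"])
    hence "finite D" using Q_finite_roots[of m] finite_subset by blast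
    with finite_imp_not_open[OF this oD] half show False by blast
  qed
  define Q where "Q z = (\<Sum>j<Suc m. acoef m j * (z-1)^(m-j))" for z :: complex
  define P1 where "P1 x = (x 0 - 1)^(m+2) * (c1 * x 2 - c2 * x 1) - c * Q (x 0)" for x :: "nat \<Rightarrow> complex"
  define P2 where "P2 x = x 0 ^ 2 * (x 0 - 1) * (x 1 * x 4 - x 2 * x 3) - c" for x :: "nat \<Rightarrow> complex"
  have v: "polyfun 5 (\<lambda>x. x i)" if "i < 5" for i using pf_var that .
  have pP1: "polyfun 5 P1"
    unfolding P1_def Q_def
    by (intro pf_sub pf_mult pf_pow pf_const v pf_sum) auto
  have pP2: "polyfun 5 P2"
    unfolding P2_def
    by (intro pf_sub pf_mult pf_pow pf_const v) auto
  have rP1: "rel_holds P1 D (wronski_mat y1 y2)"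
    unfolding rel_holds_def
  proof
    fix z assume z: "z \<in> D"
    have "(z-1)^(m+2) * (c1 * y2 z - c2 * y1 z) = c * Q z"
      unfolding cf[OF z, symmetric] Q_def fsol_poly[OF nz(2)[OF z], symmetric] by (simp add: algebra_simps)
    thus "P1 (\<lambda>i. if i = 0 then z else mat_coords (wronski_mat y1 y2 z) (i - 1)) = 0"
      by (simp add: P1_def mat_coords_def wronski_mat_def)
  qed
  have rP2: "rel_holds P2 D (wronski_mat y1 y2)"
    unfolding rel_holds_def
  proof
    fix z assume z: "z \<in> D"
    show "P2 (\<lambda>i. if i = 0 then z else mat_coords (wronski_mat y1 y2 z) (i - 1)) = 0"
      using c[OF z] by (simp add: P2_def mat_coords_def wronski_mat_def h_def algebra_simps)
  qed
  have key: "(M$1$1 * (-c2) + M$1$2 * c1 = -c2) \<and> (M$2$1 * (-c2) + M$2$2 * c1 = c1) \<and> M$1$1 * M$2$2 - M$1$2 * M$2$1 = 1"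
    if M: "M \<in> diff_galois_group D y1 y2" for M
  proof -
    have R1: "rel_holds P1 D (\<lambda>z. wronski_mat y1 y2 z ** M)" and R2: "rel_holds P2 D (\<lambda>z. wronski_mat y1 y2 z ** M)"
      using M pP1 pP2 rP1 rP2 unfolding diff_galois_group_def by auto
    have ent: "(wronski_mat y1 y2 z ** M)$1$1 = y1 z * M$1$1 + y2 z * M$2$1"
      "(wronski_mat y1 y2 z ** M)$1$2 = y1 z * M$1$2 + y2 z * M$2$2"
      "(wronski_mat y1 y2 z ** M)$2$1 = deriv y1 z * M$1$1 + deriv y2 z * M$2$1"
      "(wronski_mat y1 y2 z ** M)$2$2 = deriv y1 z * M$1$2 + deriv y2 z * M$2$2" for z
      by (simp_all add: matrix_matrix_mult_def sum_2 wronski_mat_def)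
    define \<alpha> where "\<alpha> = c1 * M$1$2 - c2 * M$1$1 + c2"
    define \<beta> where "\<beta> = c1 * M$2$2 - c2 * M$2$1 - c1"
    have lin: "\<alpha> * y1 z + \<beta> * y2 z = 0" if z: "z \<in> D" for z
    proof -
      have "(z-1)^(m+2) * (c1 * (y1 z * M$1$2 + y2 z * M$2$2) - c2 * (y1 z * M$1$1 + y2 z * M$2$1)) - c * Q z = 0"
        using R1 z unfolding rel_holds_def P1_def by (simp add: mat_coords_def ent)
      moreover have "(z-1)^(m+2) * (c1 * y2 z - c2 * y1 z) = c * Q z"
        unfolding cf[OF z, symmetric] Q_def fsol_poly[OF nz(2)[OF z], symmetric] by (simp add: algebra_simps)
      ultimately have "(z-1)^(m+2) * (\<alpha> * y1 z + \<beta> * y2 z) = 0"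
        unfolding \<alpha>_def \<beta>_def by (simp add: algebra_simps)
      thus ?thesis using nz(2)[OF z] by simp
    qed
    have ab: "\<alpha> = 0 \<and> \<beta> = 0"
      by (rule lin_dep_zero[OF oD hol half lin fund[OF half]])
    have "h (1/2) * ((y1 (1/2) * M$1$1 + y2 (1/2) * M$2$1) * (deriv y1 (1/2) * M$1$2 + deriv y2 (1/2) * M$2$2)
       - (y1 (1/2) * M$1$2 + y2 (1/2) * M$2$2) * (deriv y1 (1/2) * M$1$1 + deriv y2 (1/2) * M$2$1)) - c = 0"
    proof -
      have "P2 (\<lambda>i. if i = 0 then 1/2 else mat_coords (wronski_mat y1 y2 (1/2) ** M) (i - 1)) = 0"
        using R2 half unfolding rel_holds_def by blast
      thus ?thesis by (simp add: P2_def mat_coords_def ent h_def)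
    qed
    hence "(h (1/2) * (y1 (1/2) * deriv y2 (1/2) - y2 (1/2) * deriv y1 (1/2))) * (M$1$1 * M$2$2 - M$1$2 * M$2$1)
       = h (1/2) * (y1 (1/2) * deriv y2 (1/2) - y2 (1/2) * deriv y1 (1/2))"
      using c[OF half] by algebra
    hence "M$1$1 * M$2$2 - M$1$2 * M$2$1 = 1" using hW[OF half] by simp
    with ab show ?thesis unfolding \<alpha>_def \<beta>_def by (simp add: algebra_simps)
  qed
  have sub: "identity_component (diff_galois_group D y1 y2) \<subseteq> diff_galois_group D y1 y2"
    unfolding identity_component_def by blast
  show ?thesis
  proof (intro ballI)
    fix A B assume "A \<in> identity_component (diff_galois_group D y1 y2)" "B \<in> identity_component (diff_galois_group D y1 y2)"
    hence kA: "(A$1$1 * (-c2) + A$1$2 * c1 = -c2) \<and> (A$2$1 * (-c2) + A$2$2 * c1 = c1) \<and> A$1$1 * A$2$2 - A$1$2 * A$2$1 = 1"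
      and kB: "(B$1$1 * (-c2) + B$1$2 * c1 = -c2) \<and> (B$2$1 * (-c2) + B$2$2 * c1 = c1) \<and> B$1$1 * B$2$2 - B$1$2 * B$2$1 = 1"
      using key sub by blast+
    have "-c2 \<noteq> 0 \<or> c1 \<noteq> 0" using u0 by auto
    from comm_aux2[of "A$1$1" "-c2" "A$1$2" c1 "A$2$1" "A$2$2" "B$1$1" "B$1$2" "B$2$1" "B$2$2", OF _ _ _ _ _ _ this]
    have "A$1$1 * B$1$1 + A$1$2 * B$2$1 = B$1$1 * A$1$1 + B$1$2 * A$2$1 \<and>
          A$1$1 * B$1$2 + A$1$2 * B$2$2 = B$1$1 * A$1$2 + B$1$2 * A$2$2 \<and>
          A$2$1 * B$1$1 + A$2$2 * B$2$1 = B$2$1 * A$1$1 + B$2$2 * A$2$1 \<and>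
          A$2$1 * B$1$2 + A$2$2 * B$2$2 = B$2$1 * A$1$2 + B$2$2 * A$2$2"
      using kA kB by blast
    thus "A ** B = B ** A"
      by (simp add: vec_eq_iff forall_2 matrix_matrix_mult_def sum_2)
  qed
qed

end
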